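(* Let $\mathcal H$ be a Hilbert space, $K$ a compact operator on $\mathcal H$, and $W:D(W)\to\mathcal H$ a closed bijective operator with dense domain (so $W^{-1}$ is bounded and injective with dense range). Assume $W^{-1}KW$ (on $D(W)$) has a bounded closure $B$ which is compact. Then $\sigma(B)=\sigma(K)$. *)

theory Defs
  imports "HOL-Analysis.Analysis"
begin

class complex_vector = real_vector +
  fixes scaleC :: "complex \<Rightarrow> 'a \<Rightarrow> 'a" (infixr \<open>*\<^sub>C\<close> 75)
  assumes scaleC_add_right: "a *\<^sub>C (x + y) = a *\<^sub>C x + a *\<^sub>C y"
    and scaleC_add_left: "(a + b) *\<^sub>C x = a *\<^sub>C x + b *\<^sub>C x"
    and scaleC_scaleC: "a *\<^sub>C (b *\<^sub>C x) = (a * b) *\<^sub>C x"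
    and scaleC_one: "1 *\<^sub>C x = x"
    and scaleR_scaleC: "scaleR r x = complex_of_real r *\<^sub>C x"

class chilbert = complex_vector + banach +
  fixes cinner :: "'a \<Rightarrow> 'a \<Rightarrow> complex"
  assumes cinner_commute: "cinner x y = cnj (cinner y x)"
    and cinner_add_left: "cinner (x + y) z = cinner x z + cinner y z"
    and cinner_scaleC_left: "cinner (c *\<^sub>C x) y = cnj c * cinner x y"
    and cinner_real_nonneg: "Im (cinner x x) = 0 \<and> Re (cinner x x) \<ge> 0"
    and cinner_eq_zero_iff: "cinner x x = 0 \<longleftrightarrow> x = 0"
    and norm_eq_sqrt_cinner: "norm x = sqrt (Re (cinner x x))"

definition clinear :: "('a::complex_vector \<Rightarrow> 'b::complex_vector) \<Rightarrow> bool" where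
  "clinear f \<longleftrightarrow> (\<forall>x y. f (x + y) = f x + f y) \<and> (\<forall>c x. f (c *\<^sub>C x) = c *\<^sub>C f x)"

definition bounded_clinear :: "('a::chilbert \<Rightarrow> 'b::chilbert) \<Rightarrow> bool" where
  "bounded_clinear f \<longleftrightarrow> clinear f \<and> (\<exists>C. \<forall>x. norm (f x) \<le> norm x * C)"

definition compact_operator :: "('a::chilbert \<Rightarrow> 'b::chilbert) \<Rightarrow> bool" where
  "compact_operator f \<longleftrightarrow> bounded_clinear f \<and> compact (closure (f ` cball 0 1))"

definition op_spectrum :: "('a::chilbert \<Rightarrow> 'a) \<Rightarrow> complex set" where
  "op_spectrum T = {l. \<not> (\<exists>S. bounded_clinear S \<and>
       (\<forall>x. S (T x - l *\<^sub>C x) = x) \<and> (\<forall>y. T (S y) - l *\<^sub>C S y = y))}"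

definition csubspace :: "'a::complex_vector set \<Rightarrow> bool" where
  "csubspace D \<longleftrightarrow> 0 \<in> D \<and> (\<forall>x\<in>D. \<forall>y\<in>D. x + y \<in> D) \<and> (\<forall>c. \<forall>x\<in>D. c *\<^sub>C x \<in> D)"

definition clinear_on :: "'a::complex_vector set \<Rightarrow> ('a \<Rightarrow> 'b::complex_vector) \<Rightarrow> bool" where
  "clinear_on D f \<longleftrightarrow> csubspace D \<and> (\<forall>x\<in>D. \<forall>y\<in>D. f (x + y) = f x + f y) \<and>
     (\<forall>c. \<forall>x\<in>D. f (c *\<^sub>C x) = c *\<^sub>C f x)"

definition op_graph :: "'a set \<Rightarrow> ('a \<Rightarrow> 'b) \<Rightarrow> ('a \<times> 'b) set" where
  "op_graph D f = {(x, f x) | x. x \<in> D}"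

end

theory Submission imports Defs begin

lemma scaleC_zero_right[simp]: "c *\<^sub>C (0::'a::complex_vector) = 0"
  by (metis add_cancel_right_right scaleC_add_right add_0)
lemma scaleC_zero_left[simp]: "0 *\<^sub>C (x::'a::complex_vector) = 0"
  by (metis add_cancel_right_right scaleC_add_left add_0)
lemma scaleC_minus_right: "c *\<^sub>C (- (x::'a::complex_vector)) = - (c *\<^sub>C x)"
  by (metis add.right_inverse eq_neg_iff_add_eq_0 scaleC_add_right scaleC_zero_right)
lemma scaleC_diff_right: "c *\<^sub>C ((x::'a::complex_vector) - y) = c *\<^sub>C x - c *\<^sub>C y"
  by (metis diff_conv_add_uminus scaleC_add_right scaleC_minus_right)
lemma scaleC_minus_left: "(- c) *\<^sub>C (x::'a::complex_vector) = - (c *\<^sub>C x)"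
  by (metis add.right_inverse eq_neg_iff_add_eq_0 scaleC_add_left scaleC_zero_left)
lemma scaleC_diff_left: "(a - b) *\<^sub>C (x::'a::complex_vector) = a *\<^sub>C x - b *\<^sub>C x"
  by (metis diff_conv_add_uminus scaleC_add_left scaleC_minus_left)
lemma scaleC_m1: "(-1) *\<^sub>C (x::'a::complex_vector) = - x"
  by (simp add: scaleC_minus_left scaleC_one)

lemma cinner_scaleC_right: "cinner x (c *\<^sub>C y) = c * cinner x (y::'a::chilbert)"
  by (metis cinner_commute cinner_scaleC_left complex_cnj_cnj complex_cnj_mult)

lemma norm_scaleC: "norm (c *\<^sub>C (x::'a::chilbert)) = cmod c * norm x"
proof -
  have "cinner (c *\<^sub>C x) (c *\<^sub>C x) = (cnj c * c) * cinner x x"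
    by (simp add: cinner_scaleC_left cinner_scaleC_right)
  also have "cnj c * c = complex_of_real ((cmod c)^2)"
    by (metis complex_norm_square mult.commute)
  finally have "Re (cinner (c *\<^sub>C x) (c *\<^sub>C x)) = (cmod c)^2 * Re (cinner x x)"
    by simp
  then show ?thesis
    by (simp add: norm_eq_sqrt_cinner real_sqrt_mult)
qed

lemma bounded_linear_scaleC: "bounded_linear (\<lambda>x::'a::chilbert. c *\<^sub>C x)"
  by (rule bounded_linear_intro[where K="cmod c"])
     (auto simp: scaleC_add_right scaleR_scaleC scaleC_scaleC norm_scaleC mult.commute)

lemma bclin_bl: assumes "bounded_clinear (f::'a::chilbert \<Rightarrow> 'b::chilbert)" shows "bounded_linear f"
proof -
  from assms obtain C where l: "clinear f" and C: "\<forall>x. norm (f x) \<le> norm x * C"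
    unfolding bounded_clinear_def by blast
  show ?thesis
    by (rule bounded_linear_intro[where K=C]) (use l C in \<open>auto simp: clinear_def scaleR_scaleC\<close>)
qed

lemma infdist_lessE: assumes "A \<noteq> {}" "infdist x A < e" obtains a where "a \<in> A" "dist x a < e"
  using assms by (metis infdist_notempty cINF_less_iff bdd_below_image_dist)


definition seqc :: "('a::chilbert \<Rightarrow> 'a) \<Rightarrow> bool" where
  "seqc C \<longleftrightarrow> (\<forall>x::nat\<Rightarrow>'a. (\<forall>n. norm (x n) \<le> 1) \<longrightarrow> (\<exists>r. strict_mono r \<and> convergent (\<lambda>n. C (x (r n)))))"

lemma csub_diff: "csubspace M \<Longrightarrow> a \<in> M \<Longrightarrow> b \<in> M \<Longrightarrow> a - b \<in> M"
  unfolding csubspace_def by (metis diff_conv_add_uminus scaleC_m1)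
lemma csub_scaleR: "csubspace M \<Longrightarrow> a \<in> M \<Longrightarrow> r *\<^sub>R a \<in> M"
  unfolding csubspace_def by (simp add: scaleR_scaleC)
lemma csub_add: "csubspace M \<Longrightarrow> a \<in> M \<Longrightarrow> b \<in> M \<Longrightarrow> a + b \<in> M"
  unfolding csubspace_def by blast
lemma csub_scaleC: "csubspace M \<Longrightarrow> a \<in> M \<Longrightarrow> c *\<^sub>C a \<in> M"
  unfolding csubspace_def by blast
lemma csub_0: "csubspace M \<Longrightarrow> 0 \<in> M"
  unfolding csubspace_def by blast

lemma riesz:
  fixes M N :: "'a::chilbert set"
  assumes M: "csubspace M" "closed M" and N: "csubspace N" and MN: "M \<subseteq> N" "M \<noteq> N"
  shows "\<exists>y\<in>N. norm y = 1 \<and> (\<forall>z\<in>M. 1/2 \<le> norm (y - z))"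
proof -
  obtain x where x: "x \<in> N" "x \<notin> M" using MN by blast
  have Mne: "M \<noteq> {}" using csub_0[OF M(1)] by blast
  define d where "d = infdist x M"
  have d: "d > 0" unfolding d_def using infdist_pos_not_in_closed[OF M(2) Mne x(2)] .
  obtain m where m: "m \<in> M" "dist x m < 2 * d"
    using infdist_lessE[OF Mne, of x "2*d"] d unfolding d_def by auto
  define t where "t = norm (x - m)"
  have "x \<noteq> m" using x m by auto
  then have t: "t > 0" unfolding t_def by simp
  define y where "y = (1/t) *\<^sub>R (x - m)"
  have "y \<in> N" unfolding y_def
    by (intro csub_scaleR[OF N] csub_diff[OF N] x) (use m MN in auto)
  moreover have "norm y = 1" unfolding y_def t_def using t t_def by simp
  moreover have "1/2 \<le> norm (y - z)" if z: "z \<in> M" for z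
  proof -
    have mem: "m + t *\<^sub>R z \<in> M" by (intro csub_add[OF M(1)] csub_scaleR[OF M(1)] m z)
    have "d \<le> norm (x - (m + t *\<^sub>R z))"
      using infdist_le[OF mem, of x] unfolding d_def by (simp add: dist_norm)
    also have "x - (m + t *\<^sub>R z) = t *\<^sub>R (y - z)"
      unfolding y_def using t by (simp add: algebra_simps)
    finally have "d \<le> t * norm (y - z)" using t by simp
    moreover have "t < 2 * d" using m unfolding t_def by (simp add: dist_norm)
    ultimately have "t < 2 * (t * norm (y - z))" by linarith
    then show ?thesis using t by (simp add: field_simps)
  qed
  ultimately show ?thesis by blast
qed

context
  fixes C :: "'a::chilbert \<Rightarrow> 'a" and \<mu> :: complex and T :: "'a \<Rightarrow> 'a"
  assumes Cb: "bounded_clinear C" and Cs: "seqc C" and mu: "\<mu> \<noteq> 0"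
    and Tdef: "\<And>x. T x = C x - \<mu> *\<^sub>C x"
begin

lemma C_bl: "bounded_linear C" using bclin_bl[OF Cb] .

lemma T_bl: "bounded_linear T"
proof -
  have "T = (\<lambda>x. C x - \<mu> *\<^sub>C x)" using Tdef by (simp add: fun_eq_iff)
  then show ?thesis using bounded_linear_sub[OF C_bl bounded_linear_scaleC] by simp
qed

lemma T_scaleC: "T (c *\<^sub>C x) = c *\<^sub>C T x"
proof -
  have "C (c *\<^sub>C x) = c *\<^sub>C C x" using Cb unfolding bounded_clinear_def clinear_def by blast
  then show ?thesis unfolding Tdef by (simp add: scaleC_diff_right scaleC_scaleC mult.commute)
qed

lemma Tn_bl: "bounded_linear (T ^^ n)"
  by (induction n) (auto intro: bounded_linear_compose[OF T_bl] bounded_linear_ident)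

lemma Tn_scaleC: "(T ^^ n) (c *\<^sub>C x) = c *\<^sub>C (T ^^ n) x"
  by (induction n) (auto simp: T_scaleC)

lemma T_lin: "linear T" using T_bl bounded_linear.linear by blast
lemma Tn_lin: "linear (T ^^ n)" using Tn_bl bounded_linear.linear by blast

lemma seqc_bounded:
  fixes x :: "nat \<Rightarrow> 'a"
  assumes "\<forall>n. norm (x n) \<le> M"
  shows "\<exists>r l. strict_mono r \<and> (\<lambda>n. C (x (r n))) \<longlonglongrightarrow> l"
proof -
  define M' where "M' = max M 1"
  have M': "M' > 0" "M' \<ge> M" unfolding M'_def by auto
  define y where "y n = (1/M') *\<^sub>R x n" for n
  have "norm (y n) \<le> 1" for n
    using assms[rule_format, of n] M' unfolding y_def by (simp add: field_simps)
  then obtain r where r: "strict_mono r" "convergent (\<lambda>n. C (y (r n)))"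
    using Cs unfolding seqc_def by blast
  then obtain l where l: "(\<lambda>n. C (y (r n))) \<longlonglongrightarrow> l" unfolding convergent_def by blast
  have "(\<lambda>n. M' *\<^sub>R C (y (r n))) \<longlonglongrightarrow> M' *\<^sub>R l" by (intro tendsto_intros l)
  moreover have "M' *\<^sub>R C (y (r n)) = C (x (r n))" for n
    unfolding y_def using M' by (simp add: linear_scale[OF bounded_linear.linear[OF C_bl]])
  ultimately show ?thesis using r by auto
qed

lemma no_sep:
  fixes y :: "nat \<Rightarrow> 'a"
  assumes y: "\<forall>n. norm (y n) \<le> 1" and e: "e > 0"
    and sep: "\<And>n m. n \<noteq> m \<Longrightarrow> e \<le> norm (C (y n) - C (y m))"
  shows False
proof -
  obtain r where r: "strict_mono r" "convergent (\<lambda>n. C (y (r n)))"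
    using Cs y unfolding seqc_def by blast
  then have "Cauchy (\<lambda>n. C (y (r n)))" using convergent_Cauchy by blast
  then obtain N where N: "\<forall>m\<ge>N. \<forall>n\<ge>N. dist (C (y (r m))) (C (y (r n))) < e"
    using metric_CauchyD e by blast
  have "r N \<noteq> r (Suc N)" using r(1) by (metis lessI strict_mono_less less_irrefl)
  then have "e \<le> norm (C (y (r N)) - C (y (r (Suc N))))" using sep by blast
  moreover have "dist (C (y (r N))) (C (y (r (Suc N)))) < e" using N by auto
  ultimately show False by (simp add: dist_norm)
qed

lemma keyest:
  assumes M: "csubspace M" and w: "w \<in> M" "T w \<in> M" and Ty: "T y \<in> M"
    and far: "\<forall>z\<in>M. 1/2 \<le> norm (y - z)"
  shows "cmod \<mu> / 2 \<le> norm (C y - C w)"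
proof -
  define z where "z = w + inverse \<mu> *\<^sub>C (T w - T y)"
  have zM: "z \<in> M" unfolding z_def
    by (intro csub_add[OF M] csub_scaleC[OF M] csub_diff[OF M] w Ty)
  have "\<mu> *\<^sub>C (y - z) = \<mu> *\<^sub>C y - \<mu> *\<^sub>C w - (\<mu> * inverse \<mu>) *\<^sub>C (T w - T y)"
    unfolding z_def by (simp add: scaleC_diff_right scaleC_add_right scaleC_scaleC)
  also have "\<dots> = C y - C w" using mu by (simp add: scaleC_one Tdef)
  finally have eq: "C y - C w = \<mu> *\<^sub>C (y - z)" by simp
  have "cmod \<mu> * (1/2) \<le> cmod \<mu> * norm (y - z)"
    using far zM by (intro mult_left_mono) auto
  then show ?thesis unfolding eq norm_scaleC by simp
qed

lemma conv_sub:
  fixes u :: "nat \<Rightarrow> 'a"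
  assumes u: "\<forall>n. norm (u n) \<le> M" and Tu: "(\<lambda>n. T (u n)) \<longlonglongrightarrow> y"
  shows "\<exists>r u0. strict_mono r \<and> (\<lambda>n. u (r n)) \<longlonglongrightarrow> u0 \<and> T u0 = y"
proof -
  obtain r w where r: "strict_mono r" "(\<lambda>n. C (u (r n))) \<longlonglongrightarrow> w"
    using seqc_bounded[OF u] by blast
  have Tur: "(\<lambda>n. T (u (r n))) \<longlonglongrightarrow> y"
    using LIMSEQ_subseq_LIMSEQ[OF Tu r(1)] by (simp add: o_def)
  have "(\<lambda>n. C (u (r n)) - T (u (r n))) \<longlonglongrightarrow> w - y" by (intro tendsto_intros r(2) Tur)
  then have "(\<lambda>n. \<mu> *\<^sub>C u (r n)) \<longlonglongrightarrow> w - y" by (simp add: Tdef)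
  then have "(\<lambda>n. inverse \<mu> *\<^sub>C (\<mu> *\<^sub>C u (r n))) \<longlonglongrightarrow> inverse \<mu> *\<^sub>C (w - y)"
    by (rule bounded_linear.tendsto[OF bounded_linear_scaleC])
  then have lim: "(\<lambda>n. u (r n)) \<longlonglongrightarrow> inverse \<mu> *\<^sub>C (w - y)"
    using mu by (simp add: scaleC_scaleC scaleC_one)
  have "(\<lambda>n. T (u (r n))) \<longlonglongrightarrow> T (inverse \<mu> *\<^sub>C (w - y))"
    by (rule bounded_linear.tendsto[OF T_bl lim])
  then have "T (inverse \<mu> *\<^sub>C (w - y)) = y" using Tur LIMSEQ_unique by blast
  then show ?thesis using r(1) lim by blast
qed


lemma T_zero: "T 0 = 0" using linear_0[OF T_lin] .

lemma Tn_contin: "continuous_on UNIV (T ^^ n)" using linear_continuous_on[OF Tn_bl] .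

lemma lowb: "\<exists>c>0. \<forall>x. c * infdist x {x. T x = 0} \<le> norm (T x)"
proof (rule ccontr)
  define Nk where "Nk = {x. T x = 0}"
  have Nk_sub: "csubspace Nk" unfolding Nk_def csubspace_def
    by (auto simp: T_zero linear_add[OF T_lin] T_scaleC)
  assume "\<not> ?thesis"
  note neg = this
  have "\<forall>n. \<exists>x. norm (T x) < inverse (real (Suc n)) * infdist x Nk"
  proof
    fix n
    have pos: "inverse (real (Suc n)) > 0" by simp
    have "\<not> (\<forall>x. inverse (real (Suc n)) * infdist x Nk \<le> norm (T x))"
      using neg pos unfolding Nk_def by blast
    then show "\<exists>x. norm (T x) < inverse (real (Suc n)) * infdist x Nk" by (auto simp: not_le)
  qed
  then have "\<exists>x. \<forall>n. norm (T (x n)) < inverse (real (Suc n)) * infdist (x n) Nk"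
    by (rule choice)
  then obtain x where "\<forall>n. norm (T (x n)) < inverse (real (Suc n)) * infdist (x n) Nk"
    by blast
  then have x: "\<And>n. norm (T (x n)) < inverse (real (Suc n)) * infdist (x n) Nk" by blast
  define d where "d n = infdist (x n) Nk" for n
  have d: "d n > 0" for n
  proof -
    have "0 < inverse (real (Suc n)) * d n"
      using x[of n] norm_ge_zero[of "T (x n)"] unfolding d_def by linarith
    then show ?thesis by (rule zero_less_mult_pos) simp
  qed
  have Nne: "Nk \<noteq> {}" using csub_0[OF Nk_sub] by blast
  have "\<forall>n. \<exists>z. z \<in> Nk \<and> dist (x n) z < 2 * d n"
  proof
    fix n show "\<exists>z. z \<in> Nk \<and> dist (x n) z < 2 * d n"
      using infdist_lessE[OF Nne, of "x n" "2 * d n"] d[of n] unfolding d_def by auto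
  qed
  then have "\<exists>z. \<forall>n. z n \<in> Nk \<and> dist (x n) (z n) < 2 * d n" by (rule choice)
  then obtain z where "\<forall>n. z n \<in> Nk \<and> dist (x n) (z n) < 2 * d n" by blast
  then have z: "\<And>n. z n \<in> Nk" "\<And>n. dist (x n) (z n) < 2 * d n" by auto
  define u where "u n = (1 / d n) *\<^sub>R (x n - z n)" for n
  have u_norm: "norm (u n) \<le> 2" for n
  proof -
    have "norm (u n) = norm (x n - z n) / d n" unfolding u_def norm_scaleR using d[of n] by simp
    then show ?thesis using z(2)[of n] d[of n] by (simp add: dist_norm divide_le_eq)
  qed
  have Tu: "T (u n) = (1 / d n) *\<^sub>R T (x n)" for n
    using z(1)[of n] unfolding u_def Nk_def by (simp add: linear_scale[OF T_lin] linear_diff[OF T_lin])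
  have Tu_small: "norm (T (u n)) \<le> inverse (real (Suc n))" for n
  proof -
    have "norm (T (u n)) = norm (T (x n)) / d n" using d[of n] by (simp add: Tu)
    also have "\<dots> \<le> inverse (real (Suc n))" using x[of n] d[of n] unfolding d_def
      by (simp add: divide_le_eq mult.commute)
    finally show ?thesis .
  qed
  have Tu0: "(\<lambda>n. T (u n)) \<longlonglongrightarrow> 0"
    by (rule Lim_null_comparison[OF _ LIMSEQ_inverse_real_of_nat]) (use Tu_small in auto)
  have far: "1 \<le> norm (u n - v)" if v: "v \<in> Nk" for n v
  proof -
    have mem: "z n + d n *\<^sub>R v \<in> Nk" by (intro csub_add[OF Nk_sub] csub_scaleR[OF Nk_sub] z(1) v)
    have "d n \<le> norm (x n - (z n + d n *\<^sub>R v))"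
      using infdist_le[OF mem, of "x n"] unfolding d_def by (simp add: dist_norm)
    also have "x n - (z n + d n *\<^sub>R v) = d n *\<^sub>R (u n - v)"
      unfolding u_def using d[of n] by (simp add: algebra_simps)
    finally have "d n * 1 \<le> d n * norm (u n - v)" using d[of n] by simp
    then show ?thesis using d[of n] by (simp only: mult_le_cancel_left_pos)
  qed
  obtain r u0 where r: "strict_mono r" "(\<lambda>n. u (r n)) \<longlonglongrightarrow> u0" "T u0 = 0"
    using conv_sub[OF allI[OF u_norm] Tu0] by blast
  have "u0 \<in> Nk" using r(3) unfolding Nk_def by simp
  then have "\<And>n. 1 \<le> norm (u (r n) - u0)" using far by blast
  moreover have "\<forall>\<^sub>F n in sequentially. dist (u (r n)) u0 < 1"
    using r(2) tendstoD zero_less_one by blast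
  ultimately show False by (simp add: dist_norm eventually_sequentially) (meson not_le order_refl)
qed

lemma dense_surj:
  assumes dense: "closure (range T) = UNIV"
  shows "surj T"
proof -
  define Nk where "Nk = {x. T x = 0}"
  have Nne: "0 \<in> Nk" unfolding Nk_def by (simp add: T_zero)
  obtain c where c: "c > 0" "\<And>x. c * infdist x Nk \<le> norm (T x)" using lowb unfolding Nk_def by blast
  have "y \<in> range T" for y
  proof -
    have "y \<in> closure (range T)" using dense by simp
    then obtain s where s: "\<And>n. s n \<in> range T" "s \<longlonglongrightarrow> y" unfolding closure_sequential by blast
    define x where "x n = inv T (s n)" for n
    have x: "\<And>n. s n = T (x n)" unfolding x_def using s(1) by (metis f_inv_into_f)
    obtain Kb where Kb: "Kb > 0" "\<And>n. norm (s n) \<le> Kb"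
      using convergent_imp_Bseq[of s] s(2) BseqE convergent_def by metis
    have "\<forall>n. \<exists>z. z \<in> Nk \<and> dist (x n) z < infdist (x n) Nk + 1"
      using infdist_lessE[of Nk] Nne by (metis empty_iff less_add_one)
    then have "\<exists>z. \<forall>n. z n \<in> Nk \<and> dist (x n) (z n) < infdist (x n) Nk + 1" by (rule choice)
    then obtain z where "\<forall>n. z n \<in> Nk \<and> dist (x n) (z n) < infdist (x n) Nk + 1" by blast
    then have z: "\<And>n. z n \<in> Nk" "\<And>n. dist (x n) (z n) < infdist (x n) Nk + 1" by auto
    define u where "u n = x n - z n" for n
    have Tu: "T (u n) = s n" for n using z(1)[of n] unfolding u_def Nk_def x
      by (simp add: linear_diff[OF T_lin])
    have "norm (u n) \<le> Kb / c + 1" for n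
    proof -
      have "c * infdist (x n) Nk \<le> Kb" using c(2)[of "x n"] Kb(2)[of n] x[of n] by simp
      then have "infdist (x n) Nk \<le> Kb / c" using c(1) by (simp add: field_simps)
      then show ?thesis using z(2)[of n] unfolding u_def by (simp add: dist_norm)
    qed
    then obtain r u0 where "T u0 = y" using conv_sub[of u "Kb / c + 1" y] Tu s(2) by auto
    then show ?thesis by blast
  qed
  then show ?thesis by blast
qed

lemma kernel_chain:
  assumes surj: "surj T" and x1: "T x1 = 0" "x1 \<noteq> 0"
  shows False
proof -
  define Nk where "Nk n = {x. (T ^^ n) x = 0}" for n
  have Nsub: "csubspace (Nk n)" for n unfolding Nk_def csubspace_def
    by (auto simp: linear_0[OF Tn_lin] linear_add[OF Tn_lin] Tn_scaleC)
  have Ncl: "closed (Nk n)" for n unfolding Nk_def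
    by (rule closed_Collect_eq[OF Tn_contin continuous_on_const])
  have Nstep: "Nk n \<subseteq> Nk (Suc n)" for n unfolding Nk_def
    by (auto simp: T_zero)
  have Nmono: "m \<le> n \<Longrightarrow> Nk m \<subseteq> Nk n" for m n
    using lift_Suc_mono_le[of Nk, OF Nstep] by blast
  define xs where "xs = rec_nat x1 (\<lambda>n v. inv T v)"
  have xs0: "xs 0 = x1" unfolding xs_def by simp
  have xsS: "T (xs (Suc n)) = xs n" for n unfolding xs_def using surj
    by (simp add: surj_f_inv_f)
  have xsn: "(T ^^ n) (xs n) = x1" for n
  proof (induction n)
    case 0 then show ?case by (simp add: xs0)
  next
    case (Suc n) then show ?case by (simp add: funpow_Suc_right xsS del: funpow.simps)
  qed
  have Nne: "Nk n \<noteq> Nk (Suc n)" for n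
  proof -
    have "xs n \<in> Nk (Suc n)" unfolding Nk_def using xsn[of n] x1(1)
      by (simp add: funpow_swap1 del: funpow.simps) (metis funpow.simps(2) o_apply)
    moreover have "xs n \<notin> Nk n" unfolding Nk_def using xsn[of n] x1(2) by simp
    ultimately show ?thesis by blast
  qed
  have "\<forall>n. \<exists>y. y \<in> Nk (Suc n) \<and> norm y = 1 \<and> (\<forall>z\<in>Nk n. 1/2 \<le> norm (y - z))"
    using riesz[OF Nsub Ncl Nsub Nstep Nne] by blast
  then have "\<exists>y. \<forall>n. y n \<in> Nk (Suc n) \<and> norm (y n) = 1 \<and> (\<forall>z\<in>Nk n. 1/2 \<le> norm (y n - z))"
    by (rule choice)
  then obtain y where "\<forall>n. y n \<in> Nk (Suc n) \<and> norm (y n) = 1 \<and> (\<forall>z\<in>Nk n. 1/2 \<le> norm (y n - z))"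
    by blast
  then have y: "\<And>n. y n \<in> Nk (Suc n)" "\<And>n. norm (y n) = 1"
    "\<And>n z. z \<in> Nk n \<Longrightarrow> 1/2 \<le> norm (y n - z)" by auto
  have sep1: "cmod \<mu> / 2 \<le> norm (C (y n) - C (y m))" if "m < n" for m n
  proof (rule keyest[OF Nsub])
    have ym: "y m \<in> Nk n" using y(1)[of m] Nmono[of "Suc m" n] that by auto
    then show "y m \<in> Nk n" .
    show "T (y m) \<in> Nk n" using ym unfolding Nk_def
      by (simp add: funpow_swap1[symmetric] T_zero del: funpow.simps)
    show "T (y n) \<in> Nk n" using y(1)[of n] unfolding Nk_def
      by (simp add: funpow_Suc_right del: funpow.simps)
    show "\<forall>z\<in>Nk n. 1/2 \<le> norm (y n - z)" using y(3) by blast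
  qed
  show False
  proof (rule no_sep[of y "cmod \<mu> / 2"])
    show "\<forall>n. norm (y n) \<le> 1" using y(2) by simp
    show "0 < cmod \<mu> / 2" using mu by simp
    fix n m :: nat assume "n \<noteq> m"
    then show "cmod \<mu> / 2 \<le> norm (C (y n) - C (y m))"
      using sep1[of m n] sep1[of n m] by (metis linorder_neq_iff norm_minus_commute)
  qed
qed


lemma inj_lowb:
  assumes "inj T"
  shows "\<exists>c>0. \<forall>x. c * norm x \<le> norm (T x)"
proof -
  have "T x = 0 \<longleftrightarrow> x = 0" for x using injD[OF assms, of x 0] T_zero by auto
  then have "{x. T x = 0} = {0}" by auto
  then show ?thesis using lowb by (simp add: dist_norm)
qed

lemma range_chain:
  assumes inj: "inj T" and ns: "\<not> surj T"
  shows False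
proof -
  obtain c where c: "c > 0" "\<And>x. c * norm x \<le> norm (T x)" using inj_lowb[OF inj] by blast
  have Tn_low: "c ^ n * norm x \<le> norm ((T ^^ n) x)" for n x
  proof (induction n)
    case 0 then show ?case by simp
  next
    case (Suc n)
    have "c ^ Suc n * norm x = c * (c ^ n * norm x)" by simp
    also have "\<dots> \<le> c * norm ((T ^^ n) x)" using Suc c(1) by (simp add: mult_left_mono)
    also have "\<dots> \<le> norm (T ((T ^^ n) x))" by (rule c(2))
    finally show ?case by simp
  qed
  define Rg where "Rg n = range (T ^^ n)" for n
  have Rsub: "csubspace (Rg n)" for n unfolding Rg_def csubspace_def
  proof (intro conjI ballI allI)
    show "0 \<in> range (T ^^ n)" using linear_0[OF Tn_lin, of n] by (metis rangeI)
    fix a b assume "a \<in> range (T ^^ n)" "b \<in> range (T ^^ n)"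
    then obtain a' b' where "a = (T ^^ n) a'" "b = (T ^^ n) b'" by blast
    then show "a + b \<in> range (T ^^ n)" by (metis linear_add[OF Tn_lin] rangeI)
  next
    fix c a assume "a \<in> range (T ^^ n)"
    then obtain a' where "a = (T ^^ n) a'" by blast
    then show "c *\<^sub>C a \<in> range (T ^^ n)" by (metis Tn_scaleC rangeI)
  qed
  have Rcl: "closed (Rg n)" for n
    unfolding closed_sequential_limits
  proof (intro allI impI, elim conjE)
    fix s l assume s: "\<forall>k. s k \<in> Rg n" "s \<longlonglongrightarrow> l"
    define x where "x k = inv (T ^^ n) (s k)" for k
    have sx: "s k = (T ^^ n) (x k)" for k using s(1) unfolding x_def Rg_def by (metis f_inv_into_f)
    have cn: "c ^ n > 0" using c(1) by simp
    have "Cauchy x"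
      unfolding Cauchy_def
    proof (intro allI impI)
      fix e :: real assume e: "e > 0"
      have "Cauchy s" using s(2) convergent_Cauchy convergent_def by blast
      then obtain M where M: "\<forall>m\<ge>M. \<forall>k\<ge>M. dist (s m) (s k) < e * c ^ n"
        using metric_CauchyD[of s "e * c ^ n"] e cn by auto
      have "dist (x m) (x k) < e" if "m \<ge> M" "k \<ge> M" for m k
      proof -
        have "c ^ n * norm (x m - x k) \<le> norm ((T ^^ n) (x m - x k))" by (rule Tn_low)
        also have "\<dots> = dist (s m) (s k)" by (simp add: sx dist_norm linear_diff[OF Tn_lin])
        also have "\<dots> < e * c ^ n" using M that by blast
        finally show ?thesis using cn by (simp add: dist_norm mult.commute)
      qed
      then show "\<exists>M. \<forall>m\<ge>M. \<forall>k\<ge>M. dist (x m) (x k) < e" by blast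
    qed
    then obtain x0 where x0: "x \<longlonglongrightarrow> x0" using Cauchy_convergent convergent_def by blast
    have "(\<lambda>k. (T ^^ n) (x k)) \<longlonglongrightarrow> (T ^^ n) x0" by (rule bounded_linear.tendsto[OF Tn_bl x0])
    moreover have "s = (\<lambda>k. (T ^^ n) (x k))" using sx by (simp add: fun_eq_iff)
    ultimately have "s \<longlonglongrightarrow> (T ^^ n) x0" by simp
    then have "l = (T ^^ n) x0" using s(2) LIMSEQ_unique by blast
    then show "l \<in> Rg n" unfolding Rg_def by blast
  qed
  have Rstep: "Rg (Suc n) \<subseteq> Rg n" for n unfolding Rg_def
    by (auto simp: funpow_Suc_right simp del: funpow.simps)
  have Ranti: "m \<le> n \<Longrightarrow> Rg n \<subseteq> Rg m" for m n
    using lift_Suc_antimono_le[of Rg, OF Rstep] by blast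
  have TR: "T ((T ^^ n) a) = (T ^^ Suc n) a" for n a by simp
  have Rne: "Rg (Suc n) \<noteq> Rg n" for n
  proof (induction n)
    case 0 then show ?case using ns unfolding Rg_def by simp
  next
    case (Suc n)
    show ?case
    proof
      assume eq: "Rg (Suc (Suc n)) = Rg (Suc n)"
      have "Rg n \<subseteq> Rg (Suc n)"
      proof
        fix v assume "v \<in> Rg n"
        then obtain a where a: "v = (T ^^ n) a" unfolding Rg_def by blast
        have "T v \<in> Rg (Suc n)" unfolding a Rg_def by (metis TR rangeI)
        then have "T v \<in> Rg (Suc (Suc n))" using eq by simp
        then obtain b where "T v = (T ^^ Suc (Suc n)) b" unfolding Rg_def by blast
        then have "T v = T ((T ^^ Suc n) b)" by simp
        then have "v = (T ^^ Suc n) b" using inj by (simp add: inj_eq)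
        then show "v \<in> Rg (Suc n)" unfolding Rg_def by blast
      qed
      then show False using Suc.IH Rstep[of n] by blast
    qed
  qed
  have "\<forall>n. \<exists>y. y \<in> Rg n \<and> norm y = 1 \<and> (\<forall>z\<in>Rg (Suc n). 1/2 \<le> norm (y - z))"
    using riesz[OF Rsub Rcl Rsub Rstep Rne] by blast
  then have "\<exists>y. \<forall>n. y n \<in> Rg n \<and> norm (y n) = 1 \<and> (\<forall>z\<in>Rg (Suc n). 1/2 \<le> norm (y n - z))"
    by (rule choice)
  then obtain y where "\<forall>n. y n \<in> Rg n \<and> norm (y n) = 1 \<and> (\<forall>z\<in>Rg (Suc n). 1/2 \<le> norm (y n - z))"
    by blast
  then have y: "\<And>n. y n \<in> Rg n" "\<And>n. norm (y n) = 1"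
    "\<And>n z. z \<in> Rg (Suc n) \<Longrightarrow> 1/2 \<le> norm (y n - z)" by auto
  have sep1: "cmod \<mu> / 2 \<le> norm (C (y n) - C (y m))" if "n < m" for m n
  proof (rule keyest[OF Rsub])
    have ym: "y m \<in> Rg (Suc n)" using y(1)[of m] Ranti[of "Suc n" m] that by auto
    then show "y m \<in> Rg (Suc n)" .
    obtain a where "y m = (T ^^ m) a" using y(1)[of m] unfolding Rg_def by blast
    then have "T (y m) \<in> Rg (Suc m)" unfolding Rg_def by (metis TR rangeI)
    then show "T (y m) \<in> Rg (Suc n)" using Ranti[of "Suc n" "Suc m"] that by auto
    obtain b where "y n = (T ^^ n) b" using y(1)[of n] unfolding Rg_def by blast
    then show "T (y n) \<in> Rg (Suc n)" unfolding Rg_def by (metis TR rangeI)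
    show "\<forall>z\<in>Rg (Suc n). 1/2 \<le> norm (y n - z)" using y(3) by blast
  qed
  show False
  proof (rule no_sep[of y "cmod \<mu> / 2"])
    show "\<forall>n. norm (y n) \<le> 1" using y(2) by simp
    show "0 < cmod \<mu> / 2" using mu by simp
    fix n m :: nat assume "n \<noteq> m"
    then show "cmod \<mu> / 2 \<le> norm (C (y n) - C (y m))"
      using sep1[of n m] sep1[of m n] by (metis linorder_neq_iff norm_minus_commute)
  qed
qed

lemma invertible_of:
  assumes inj: "inj T" and surj: "surj T"
  shows "\<exists>S. bounded_clinear S \<and> (\<forall>x. S (T x) = x) \<and> (\<forall>y. T (S y) = y)"
proof -
  obtain c where c: "c > 0" "\<And>x. c * norm x \<le> norm (T x)" using inj_lowb[OF inj] by blast
  define S where "S = inv T"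
  have ST: "S (T x) = x" for x unfolding S_def using inj by simp
  have TS: "T (S y) = y" for y unfolding S_def using surj by (simp add: surj_f_inv_f)
  have "clinear S" unfolding clinear_def
  proof (intro conjI allI)
    fix a b
    have "T (S a + S b) = a + b" by (simp add: linear_add[OF T_lin] TS)
    then show "S (a + b) = S a + S b" by (metis ST)
  next
    fix c a
    have "T (c *\<^sub>C S a) = c *\<^sub>C a" by (simp add: T_scaleC TS)
    then show "S (c *\<^sub>C a) = c *\<^sub>C S a" by (metis ST)
  qed
  moreover have "norm (S y) \<le> norm y * (1 / c)" for y
    using c(2)[of "S y"] c(1) by (simp add: TS field_simps mult.commute)
  ultimately have "bounded_clinear S" unfolding bounded_clinear_def by blast
  then show ?thesis using ST TS by blast
qed

lemma fred_inj:
  assumes "inj T"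
  shows "\<exists>S. bounded_clinear S \<and> (\<forall>x. S (T x) = x) \<and> (\<forall>y. T (S y) = y)"
  using invertible_of[OF assms] range_chain[OF assms] by blast

lemma fred_dense:
  assumes "closure (range T) = UNIV"
  shows "\<exists>S. bounded_clinear S \<and> (\<forall>x. S (T x) = x) \<and> (\<forall>y. T (S y) = y)"
proof -
  have s: "surj T" using dense_surj[OF assms] .
  have "inj T"
  proof (rule injI, rule ccontr)
    fix a b assume "T a = T b" "a \<noteq> b"
    then have "T (a - b) = 0" "a - b \<noteq> 0" by (auto simp: linear_diff[OF T_lin])
    then show False using kernel_chain[OF s] by blast
  qed
  then show ?thesis using fred_inj by blast
qed

end


lemma compact_seqc: assumes "compact_operator f" shows "seqc f"
  unfolding seqc_def
proof (intro allI impI)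
  fix x :: "nat \<Rightarrow> 'a" assume x: "\<forall>n. norm (x n) \<le> 1"
  have cpt: "compact (closure (f ` cball 0 1))" using assms unfolding compact_operator_def by blast
  have "\<forall>n. f (x n) \<in> closure (f ` cball 0 1)"
  proof
    fix n have "x n \<in> cball 0 1" using x by (simp add: mem_cball_0)
    then have "f (x n) \<in> f ` cball 0 1" by (rule imageI)
    then show "f (x n) \<in> closure (f ` cball 0 1)" by (rule subsetD[OF closure_subset])
  qed
  then obtain l r where "strict_mono r" "((\<lambda>n. f (x n)) \<circ> r) \<longlonglongrightarrow> l"
    using seq_compactE[OF compact_imp_seq_compact[OF cpt], of "\<lambda>n. f (x n)"] by blast
  then show "\<exists>r. strict_mono r \<and> convergent (\<lambda>n. f (x (r n)))"
    unfolding convergent_def o_def by blast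
qed

lemma cball_seqc: fixes f :: "'a::chilbert \<Rightarrow> 'a"
  assumes "compact (cball (0::'a) 1)" "bounded_clinear f" shows "seqc f"
  unfolding seqc_def
proof (intro allI impI)
  fix x :: "nat \<Rightarrow> 'a" assume x: "\<forall>n. norm (x n) \<le> 1"
  then have "\<forall>n. x n \<in> cball 0 1" by (auto simp: mem_cball_0)
  then obtain l r where r: "strict_mono r" "(x \<circ> r) \<longlonglongrightarrow> l"
    using seq_compactE[OF compact_imp_seq_compact[OF assms(1)]] by blast
  have "(\<lambda>n. f ((x \<circ> r) n)) \<longlonglongrightarrow> f l"
    by (rule bounded_linear.tendsto[OF bclin_bl[OF assms(2)] r(2)])
  then show "\<exists>r. strict_mono r \<and> convergent (\<lambda>n. f (x (r n)))"
    using r(1) unfolding convergent_def o_def by blast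
qed

lemma inv_cball:
  fixes T S :: "'a::chilbert \<Rightarrow> 'a"
  assumes "compact_operator T" "bounded_clinear S" "\<forall>x. S (T x) = x"
  shows "compact (cball (0::'a) 1)"
proof -
  have cpt: "compact (closure (T ` cball 0 1))" using assms unfolding compact_operator_def by blast
  have c2: "compact (S ` closure (T ` cball 0 1))"
    by (rule compact_continuous_image[OF linear_continuous_on[OF bclin_bl[OF assms(2)]] cpt])
  have sub: "cball 0 1 \<subseteq> S ` closure (T ` cball 0 1)"
  proof
    fix x :: 'a assume "x \<in> cball 0 1"
    then have "T x \<in> T ` cball 0 1" by (rule imageI)
    then have "T x \<in> closure (T ` cball 0 1)" by (rule subsetD[OF closure_subset])
    then show "x \<in> S ` closure (T ` cball 0 1)" using assms(3) by (metis image_eqI)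
  qed
  have "compact (S ` closure (T ` cball 0 1) \<inter> cball 0 1)"
    by (rule compact_Int_closed[OF c2 closed_cball])
  moreover have "S ` closure (T ` cball 0 1) \<inter> cball 0 1 = cball 0 1" using sub by blast
  ultimately show ?thesis by simp
qed

lemma bclin_plus_id: assumes "bounded_clinear (f::'a::chilbert \<Rightarrow> 'a)" shows "bounded_clinear (\<lambda>x. f x + x)"
proof -
  from assms obtain C where l: "clinear f" and C: "\<forall>x. norm (f x) \<le> norm x * C"
    unfolding bounded_clinear_def by blast
  have "clinear (\<lambda>x. f x + x)" using l unfolding clinear_def by (simp add: scaleC_add_right algebra_simps)
  moreover have "norm (f x + x) \<le> norm x * (C + 1)" for x
    using norm_triangle_ineq[of "f x" x] C[rule_format, of x] by (simp add: algebra_simps)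
  ultimately show ?thesis unfolding bounded_clinear_def by blast
qed

lemma not_spec: "l \<notin> op_spectrum T \<longleftrightarrow> (\<exists>S. bounded_clinear S \<and>
       (\<forall>x. S (T x - l *\<^sub>C x) = x) \<and> (\<forall>y. T (S y) - l *\<^sub>C S y = y))"
  unfolding op_spectrum_def by simp

lemma fred_inj_gen:
  fixes T :: "'a::chilbert \<Rightarrow> 'a"
  assumes cT: "compact_operator T" and cO: "compact (cball (0::'a) 1) \<or> l \<noteq> 0"
    and inj: "\<And>a b. T a - l *\<^sub>C a = T b - l *\<^sub>C b \<Longrightarrow> a = b"
  shows "l \<notin> op_spectrum T"
proof (cases "l = 0")
  case False
  have bT: "bounded_clinear T" using cT unfolding compact_operator_def by blast
  have injT: "inj (\<lambda>x. T x - l *\<^sub>C x)" by (rule injI) (rule inj)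
  show ?thesis unfolding not_spec
    by (rule fred_inj[where T="\<lambda>x. T x - l *\<^sub>C x", OF bT compact_seqc[OF cT] False _ injT]) simp
next
  case True
  then have cb: "compact (cball (0::'a) 1)" using cO by blast
  have bT: "bounded_clinear T" using cT unfolding compact_operator_def by blast
  have eq: "T x - l *\<^sub>C x = (T x + x) - 1 *\<^sub>C x" for x using True by (simp add: scaleC_one)
  have injT: "inj (\<lambda>x. T x - l *\<^sub>C x)" by (rule injI) (rule inj)
  show ?thesis unfolding not_spec
    by (rule fred_inj[where T="\<lambda>x. T x - l *\<^sub>C x", OF bclin_plus_id[OF bT] cball_seqc[OF cb bclin_plus_id[OF bT]] one_neq_zero eq injT])
qed

lemma fred_dense_gen:
  fixes T :: "'a::chilbert \<Rightarrow> 'a"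
  assumes cT: "compact_operator T" and cO: "compact (cball (0::'a) 1) \<or> l \<noteq> 0"
    and dense: "closure (range (\<lambda>x. T x - l *\<^sub>C x)) = UNIV"
  shows "l \<notin> op_spectrum T"
proof (cases "l = 0")
  case False
  have bT: "bounded_clinear T" using cT unfolding compact_operator_def by blast
  show ?thesis unfolding not_spec
    by (rule fred_dense[where T="\<lambda>x. T x - l *\<^sub>C x", OF bT compact_seqc[OF cT] False _ dense]) simp
next
  case True
  then have cb: "compact (cball (0::'a) 1)" using cO by blast
  have bT: "bounded_clinear T" using cT unfolding compact_operator_def by blast
  have eq: "T x - l *\<^sub>C x = (T x + x) - 1 *\<^sub>C x" for x using True by (simp add: scaleC_one)
  show ?thesis unfolding not_spec
    by (rule fred_dense[where T="\<lambda>x. T x - l *\<^sub>C x", OF bclin_plus_id[OF bT] cball_seqc[OF cb bclin_plus_id[OF bT]] one_neq_zero eq dense])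
qed

theorem mainTheorem12:
  fixes K B W :: "'a::chilbert \<Rightarrow> 'a" and D :: "'a set"
  assumes K_compact: "compact_operator K"
    and W_linear: "clinear_on D W"
    and W_closed: "closed (op_graph D W)"
    and W_bij: "bij_betw W D UNIV"
    and D_dense: "closure D = UNIV"
    and B_bounded: "bounded_clinear B"
    and B_closure: "closure (op_graph D (\<lambda>x. inv_into D W (K (W x)))) = op_graph UNIV B"
    and B_compact: "compact_operator B"
  shows "op_spectrum B = op_spectrum K"
proof -
  define V where "V = inv_into D W"
  have surjW: "W ` D = UNIV" using W_bij by (simp add: bij_betw_def)
  have injW: "inj_on W D" using W_bij by (simp add: bij_betw_def)
  have VD: "V y \<in> D" for y unfolding V_def using surjW by (metis UNIV_I inv_into_into)
  have WV: "W (V y) = y" for y unfolding V_def using surjW by (metis UNIV_I f_inv_into_f)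
  have VW: "x \<in> D \<Longrightarrow> V (W x) = x" for x unfolding V_def using injW by simp
  have Vinj: "V a = V b \<Longrightarrow> a = b" for a b by (metis WV)
  have Dsub: "csubspace D" using W_linear unfolding clinear_on_def by blast
  have Wadd: "x \<in> D \<Longrightarrow> y \<in> D \<Longrightarrow> W (x + y) = W x + W y" for x y
    using W_linear unfolding clinear_on_def by blast
  have WscaleC: "x \<in> D \<Longrightarrow> W (c *\<^sub>C x) = c *\<^sub>C W x" for x c
    using W_linear unfolding clinear_on_def by blast
  have Vadd: "V (a + b) = V a + V b" for a b
  proof -
    have "W (V a + V b) = a + b" using Wadd[OF VD[of a] VD[of b]] WV by simp
    then show ?thesis using VW[OF csub_add[OF Dsub VD[of a] VD[of b]]] by simp
  qed
  have VscaleC: "V (c *\<^sub>C a) = c *\<^sub>C V a" for c a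
  proof -
    have "W (c *\<^sub>C V a) = c *\<^sub>C a" using WscaleC[OF VD[of a]] WV by simp
    then show ?thesis using VW[OF csub_scaleC[OF Dsub VD[of a]], of c] by simp
  qed
  have Vdiff: "V (a - c *\<^sub>C b) = V a - c *\<^sub>C V b" for a b c
  proof -
    have e: "a - c *\<^sub>C b = a + (-1) *\<^sub>C (c *\<^sub>C b)" by (simp add: scaleC_m1)
    have "V (a - c *\<^sub>C b) = V a + (-1) *\<^sub>C (c *\<^sub>C V b)" by (simp only: e Vadd VscaleC)
    then show ?thesis by (simp add: scaleC_m1)
  qed
  have BV: "B (V y) = V (K y)" for y
  proof -
    have "(V y, V (K (W (V y)))) \<in> op_graph D (\<lambda>x. V (K (W x)))"
      unfolding op_graph_def using VD by blast
    then have "(V y, V (K (W (V y)))) \<in> op_graph UNIV B"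
      using B_closure closure_subset unfolding V_def by blast
    then show ?thesis unfolding op_graph_def using WV by auto
  qed
  have inter: "B (V y) - l *\<^sub>C V y = V (K y - l *\<^sub>C y)" for y l
    by (simp add: BV Vdiff)
  have "l \<in> op_spectrum B \<longleftrightarrow> l \<in> op_spectrum K" for l
  proof
    assume lB: "l \<in> op_spectrum B"
    show "l \<in> op_spectrum K"
    proof (rule ccontr)
      assume "l \<notin> op_spectrum K"
      then obtain S where S: "bounded_clinear S" "\<forall>x. S (K x - l *\<^sub>C x) = x"
        "\<forall>y. K (S y) - l *\<^sub>C S y = y" unfolding not_spec by blast
      have "D \<subseteq> range (\<lambda>x. B x - l *\<^sub>C x)"
      proof
        fix d assume "d \<in> D"
        then have "d = V (K (S (W d)) - l *\<^sub>C S (W d))" using S(3) VW by simp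
        also have "\<dots> = B (V (S (W d))) - l *\<^sub>C V (S (W d))" by (simp add: inter)
        finally show "d \<in> range (\<lambda>x. B x - l *\<^sub>C x)" by blast
      qed
      then have dense: "closure (range (\<lambda>x. B x - l *\<^sub>C x)) = UNIV"
        using closure_mono D_dense by blast
      have "compact (cball (0::'a) 1) \<or> l \<noteq> 0"
      proof (cases "l = 0")
        case True
        then have "\<forall>x. S (K x) = x" using S(2) by simp
        then show ?thesis using inv_cball[OF K_compact S(1)] by blast
      qed simp
      then have "l \<notin> op_spectrum B" using fred_dense_gen[OF B_compact _ dense] by blast
      then show False using lB by blast
    qed
  next
    assume lK: "l \<in> op_spectrum K"
    show "l \<in> op_spectrum B"
    proof (rule ccontr)
      assume "l \<notin> op_spectrum B"
      then obtain S where S: "bounded_clinear S" "\<forall>x. S (B x - l *\<^sub>C x) = x"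
        unfolding not_spec by blast
      have inj: "a = b" if "K a - l *\<^sub>C a = K b - l *\<^sub>C b" for a b
      proof -
        have "B (V a) - l *\<^sub>C V a = B (V b) - l *\<^sub>C V b" using that by (simp add: inter)
        then have "V a = V b" using S(2) by metis
        then show ?thesis by (rule Vinj)
      qed
      have "compact (cball (0::'a) 1) \<or> l \<noteq> 0"
      proof (cases "l = 0")
        case True
        then have "\<forall>x. S (B x) = x" using S(2) by simp
        then show ?thesis using inv_cball[OF B_compact S(1)] by blast
      qed simp
      then have "l \<notin> op_spectrum K" using fred_inj_gen[OF K_compact _ inj] by blast
      then show False using lK by blast
    qed
  qed
  then show ?thesis by blast
qed

end
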